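(* In the semi-discrete heat setting described in the context, the map $\Lambda_h:\mathcal{W}_h\to\mathcal{F}(\mathring\Omega_h)$, $\varphi\mapsto u_\varphi(T)$, is Fréchet-differentiable at $0$.
   Context: Let $h>0$, integers $M,N\ge2$, grid $\Omega_h=\{(ih,jh):0\le i\le M,0\le j\le N\}$ with nodes indexed $(i,j)$, interior $\mathring\Omega_h=\{1\le i\le M-1,1\le j\le N-1\}$, $\Gamma^1=\{(1,j):1\le j\le N-1\}$; $\mathcal{F}(\mathring\Omega_h)$ is the space of real functions on $\mathring\Omega_h$, extended by $0$ on boundary nodes. $\mathcal{W}_h$ is the set of perturbations $\varphi(t)=\sum_{j=1}^{N-1}h\lambda_j(t)V_j$ ($V_j$ the unit horizontal vector at boundary node $(0,j)$, zero elsewhere) with $\lambda_j\in L^\infty(\mathbb{R}^+)\cap C(\mathbb{R}^+)$, $\sup_j\|\lambda_j\|_\infty<1/2$. $A(\varphi)$ is the 5-point operator $[A(\varphi)\phi]_{(i,j)}=h^{-2}(4\phi_{(i,j)}-\phi_{(i+1,j)}-\phi_{(i-1,j)}-\phi_{(i,j+1)}-\phi_{(i,j-1)})$ off $\Gamma^1$, and $[A(\varphi)\phi]_{(1,j)}=h^{-2}\big(2(1+\frac{1}{1+\lambda_j(t)})\phi_{(1,j)}-\frac{2}{2+\lambda_j(t)}\phi_{(2,j)}-\phi_{(1,j+1)}-\phi_{(1,j-1)}\big)$. Given a source $F:[0,\infty)\to\mathcal{F}(\mathring\Omega_h)$ and $u_0\in\mathcal{F}(\mathring\Omega_h)$, $u_\varphi$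 solves $\partial_tu_\varphi+A(\varphi)u_\varphi=F$, $u_\varphi(0)=u_0$, and $T>0$ is fixed. *)

theory Defs
  imports "HOL-Analysis.Analysis"
begin

definition interior :: "nat \<Rightarrow> nat \<Rightarrow> (nat \<times> nat) set" where
  "interior M N = {(i,j). 1 \<le> i \<and> i \<le> M - 1 \<and> 1 \<le> j \<and> j \<le> N - 1}"

definition ext0 :: "nat \<Rightarrow> nat \<Rightarrow> (nat \<times> nat \<Rightarrow> real) \<Rightarrow> nat \<times> nat \<Rightarrow> real" where
  "ext0 M N v p = (if p \<in> interior M N then v p else 0)"

text \<open>The perturbed 5-point operator A(\<phi>) at time t; \<phi> is given by the family
  lam j t = \<lambda>_j(t), j = 1..N-1.\<close>
definition Aop :: "real \<Rightarrow> nat \<Rightarrow> nat \<Rightarrow> (nat \<Rightarrow> real \<Rightarrow> real) \<Rightarrow> real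
                   \<Rightarrow> (nat \<times> nat \<Rightarrow> real) \<Rightarrow> nat \<times> nat \<Rightarrow> real" where
  "Aop h M N lam t v p =
     (let i = fst p; j = snd p; w = ext0 M N v in
      if i = 1 then
        (2 * (1 + 1 / (1 + lam j t)) * w (1, j) - 2 / (2 + lam j t) * w (2, j)
          - w (1, j + 1) - w (1, j - 1)) / h\<^sup>2
      else
        (4 * w (i, j) - w (i + 1, j) - w (i - 1, j) - w (i, j + 1) - w (i, j - 1)) / h\<^sup>2)"

definition pspace :: "nat \<Rightarrow> (nat \<Rightarrow> real \<Rightarrow> real) set" where
  "pspace N = {lam. \<forall>j\<in>{1..N-1}. continuous_on {0..} (lam j) \<and> bounded (lam j ` {0..})}"

definition pnorm :: "nat \<Rightarrow> (nat \<Rightarrow> real \<Rightarrow> real) \<Rightarrow> real" where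
  "pnorm N lam = Max ((\<lambda>j. SUP t\<in>{0::real..}. \<bar>lam j t\<bar>) ` {1..N-1})"

definition Wh :: "nat \<Rightarrow> (nat \<Rightarrow> real \<Rightarrow> real) set" where
  "Wh N = {lam \<in> pspace N. pnorm N lam < 1/2}"

definition solves :: "real \<Rightarrow> nat \<Rightarrow> nat \<Rightarrow> (real \<Rightarrow> nat \<times> nat \<Rightarrow> real) \<Rightarrow> (nat \<times> nat \<Rightarrow> real)
                      \<Rightarrow> (nat \<Rightarrow> real \<Rightarrow> real) \<Rightarrow> (real \<Rightarrow> nat \<times> nat \<Rightarrow> real) \<Rightarrow> bool" where
  "solves h M N F u0 lam u \<longleftrightarrow>
     (\<forall>p\<in>interior M N. u 0 p = u0 p \<and>
        (\<forall>t\<ge>0. ((\<lambda>s. u s p) has_real_derivative (F t p - Aop h M N lam t (u t) p)) (at t within {0..})))"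

end

theory Submission
  imports Defs
begin

lemma ext0_lin: "ext0 M N (\<lambda>p. a * v p + b * w p) q = a * ext0 M N v q + b * ext0 M N w q"
  by (simp add: ext0_def)

lemma divlin: "(a*x + b*y)/(c::real) = a*(x/c) + b*(y/c)"
  by (simp add: add_divide_distrib)

lemma Aop_lin: "Aop h M N lam t (\<lambda>p. a * v p + b * w p) p = a * Aop h M N lam t v p + b * Aop h M N lam t w p"
proof -
  have e: "\<And>c1 c2 x1 x2 x3 x4 y1 y2 y3 y4::real. c1 * (a*x1+b*y1) - c2*(a*x2+b*y2) - (a*x3+b*y3) - (a*x4+b*y4)
     = a*(c1*x1 - c2*x2 - x3 - x4) + b*(c1*y1 - c2*y2 - y3 - y4)" by algebra
  have e2: "\<And>x0 x1 x2 x3 x4 y0 y1 y2 y3 y4::real. 4 * (a*x0+b*y0) - (a*x1+b*y1) - (a*x2+b*y2) - (a*x3+b*y3) - (a*x4+b*y4)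
     = a*(4*x0 - x1 - x2 - x3 - x4) + b*(4*y0 - y1 - y2 - y3 - y4)" by algebra
  show ?thesis
    unfolding Aop_def Let_def ext0_lin e e2 divlin by simp
qed

lemma Aop_diff: "Aop h M N lam t (\<lambda>p. v p - w p) p = Aop h M N lam t v p - Aop h M N lam t w p"
  using Aop_lin[of h M N lam t 1 v "-1" w p] by simp

definition Qop :: "real \<Rightarrow> nat \<Rightarrow> nat \<Rightarrow> (nat \<Rightarrow> real \<Rightarrow> real) \<Rightarrow> real
                   \<Rightarrow> (nat \<times> nat \<Rightarrow> real) \<Rightarrow> nat \<times> nat \<Rightarrow> real" where
 "Qop h M N lam t v p = (if fst p = 1 then
     ((2/(1+lam (snd p) t) - 2) * ext0 M N v (1, snd p) - (2/(2+lam (snd p) t) - 1) * ext0 M N v (2, snd p)) / h\<^sup>2 else 0)"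

lemma Aop_split: "Aop h M N lam t v p = Aop h M N (\<lambda>_ _. 0) t v p + Qop h M N lam t v p"
proof (cases "fst p = 1")
  case True
  have "ext0 M N v (0, snd p) = 0" by (simp add: ext0_def interior_def)
  then show ?thesis using True unfolding Aop_def Let_def Qop_def
    by (simp add: add_divide_distrib[symmetric] algebra_simps)
next
  case False
  then show ?thesis unfolding Aop_def Let_def Qop_def by simp
qed


lemma finite_interior: "finite (interior M N)"
proof -
  have "interior M N \<subseteq> {0..M} \<times> {0..N}" by (auto simp: interior_def)
  then show ?thesis by (rule finite_subset) auto
qed

lemma ext0_out: "q \<notin> interior M N \<Longrightarrow> ext0 M N v q = 0" by (simp add: ext0_def)
lemma ext0_in: "q \<in> interior M N \<Longrightarrow> ext0 M N v q = v q" by (simp add: ext0_def)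

lemma shift_sum:
  fixes W :: "nat \<times> nat \<Rightarrow> real"
  assumes "inj_on \<sigma> I" "finite I" "\<And>q. q \<notin> I \<Longrightarrow> W q = 0"
  shows "(\<Sum>p\<in>I. (W (\<sigma> p))\<^sup>2) \<le> (\<Sum>p\<in>I. (W p)\<^sup>2)"
proof -
  have "(\<Sum>p\<in>I. (W (\<sigma> p))\<^sup>2) = (\<Sum>q\<in>\<sigma> ` I. (W q)\<^sup>2)"
    using sum.reindex[OF assms(1), of "\<lambda>q. (W q)\<^sup>2"] by simp
  also have "\<dots> = (\<Sum>q\<in>\<sigma> ` I \<inter> I. (W q)\<^sup>2)"
    by (rule sum.mono_neutral_right) (use assms in auto)
  also have "\<dots> \<le> (\<Sum>q\<in>I. (W q)\<^sup>2)"
    by (rule sum_mono2) (use assms in auto)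
  finally show ?thesis .
qed

definition s1 :: "nat \<times> nat \<Rightarrow> nat \<times> nat" where "s1 p = (fst p + 1, snd p)"
definition s2 :: "nat \<times> nat \<Rightarrow> nat \<times> nat" where "s2 p = (fst p - 1, snd p)"
definition s3 :: "nat \<times> nat \<Rightarrow> nat \<times> nat" where "s3 p = (fst p, snd p + 1)"
definition s4 :: "nat \<times> nat \<Rightarrow> nat \<times> nat" where "s4 p = (fst p, snd p - 1)"

lemma shifts_inj: "inj_on s1 (interior M N)" "inj_on s2 (interior M N)"
   "inj_on s3 (interior M N)" "inj_on s4 (interior M N)"
  by (auto simp: inj_on_def s1_def s2_def s3_def s4_def interior_def prod_eq_iff)

lemma shift_sum_ext:
  assumes "inj_on \<sigma> (interior M N)"
  shows "(\<Sum>p\<in>interior M N. (ext0 M N v (\<sigma> p))\<^sup>2) \<le> (\<Sum>p\<in>interior M N. (v p)\<^sup>2)"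
proof -
  have "(\<Sum>p\<in>interior M N. (ext0 M N v (\<sigma> p))\<^sup>2) \<le> (\<Sum>p\<in>interior M N. (ext0 M N v p)\<^sup>2)"
    by (rule shift_sum[OF assms finite_interior]) (simp add: ext0_def)
  also have "\<dots> = (\<Sum>p\<in>interior M N. (v p)\<^sup>2)"
    by (rule sum.cong) (auto simp: ext0_def)
  finally show ?thesis .
qed

lemma coef_bounds:
  fixes x :: real assumes "\<bar>x\<bar> \<le> 1/2"
  shows "\<bar>2 * (1 + 1 / (1 + x))\<bar> \<le> 6" "\<bar>2 / (2 + x)\<bar> \<le> 6"
proof -
  have a: "1 + x \<ge> 1/2" using assms by auto
  then have "1/(1+x) \<le> 2" by (simp add: divide_le_eq)
  moreover have "1/(1+x) \<ge> 0" using a by simp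
  ultimately show "\<bar>2 * (1 + 1 / (1 + x))\<bar> \<le> 6" by simp
  have b: "2 + x \<ge> 3/2" using assms by auto
  then have "2/(2+x) \<le> 6" by (simp add: divide_le_eq)
  moreover have "2/(2+x) \<ge> 0" using b by simp
  ultimately show "\<bar>2 / (2 + x)\<bar> \<le> 6" by simp
qed

lemma Aop_bound:
  assumes h: "h > 0" and lb: "\<bar>lam (snd p) t\<bar> \<le> 1/2"
  shows "\<bar>Aop h M N lam t v p\<bar> \<le> 6 / h\<^sup>2 * (\<bar>ext0 M N v p\<bar> + \<bar>ext0 M N v (s1 p)\<bar> + \<bar>ext0 M N v (s2 p)\<bar>
            + \<bar>ext0 M N v (s3 p)\<bar> + \<bar>ext0 M N v (s4 p)\<bar>)"
proof -
  obtain i j where p: "p = (i, j)" by (cases p)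
  define W where "W = ext0 M N v"
  define S where "S = \<bar>W p\<bar> + \<bar>W (s1 p)\<bar> + \<bar>W (s2 p)\<bar> + \<bar>W (s3 p)\<bar> + \<bar>W (s4 p)\<bar>"
  have hp: "h\<^sup>2 > 0" using h by simp
  have num: "\<bar>X\<bar> \<le> 6 * S \<Longrightarrow> \<bar>X / h\<^sup>2\<bar> \<le> 6 / h\<^sup>2 * S" for X
  proof -
    assume "\<bar>X\<bar> \<le> 6 * S"
    then have "\<bar>X\<bar> / h\<^sup>2 \<le> (6 * S) / h\<^sup>2" using hp by (intro divide_right_mono) auto
    then show ?thesis by (simp add: abs_divide)
  qed
  show ?thesis
  proof (cases "i = 1")
    case True
    define c1 where "c1 = 2 * (1 + 1 / (1 + lam j t))"
    define c2 where "c2 = 2 / (2 + lam j t)"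
    have c: "\<bar>c1\<bar> \<le> 6" "\<bar>c2\<bar> \<le> 6" using coef_bounds[of "lam j t"] lb p c1_def c2_def by auto
    have "\<bar>c1 * W (1,j)\<bar> \<le> 6 * \<bar>W (1,j)\<bar>" using c by (simp add: abs_mult mult_right_mono)
    moreover have "\<bar>c2 * W (2,j)\<bar> \<le> 6 * \<bar>W (2,j)\<bar>" using c by (simp add: abs_mult mult_right_mono)
    have "\<bar>c1 * W (1, j) - c2 * W (2, j) - W (1, j + 1) - W (1, j - 1)\<bar> \<le> 6 * S"
    proof -
      have Se: "S = \<bar>W (1,j)\<bar> + \<bar>W (2,j)\<bar> + \<bar>W (0,j)\<bar> + \<bar>W (1,j+1)\<bar> + \<bar>W (1,j-1)\<bar>"
        using True p by (simp add: S_def s1_def s2_def s3_def s4_def numeral_2_eq_2)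
      have t: "\<bar>A - B - C - D\<bar> \<le> \<bar>A\<bar> + \<bar>B\<bar> + \<bar>C\<bar> + \<bar>D\<bar>" for A B C D :: real by arith
      show ?thesis using t[of "c1 * W (1,j)" "c2 * W (2,j)" "W (1, j + 1)" "W (1, j - 1)"] Se
        \<open>\<bar>c1 * W (1,j)\<bar> \<le> 6 * \<bar>W (1,j)\<bar>\<close> \<open>\<bar>c2 * W (2,j)\<bar> \<le> 6 * \<bar>W (2,j)\<bar>\<close> by arith
    qed
    from num[OF this] show ?thesis using True p
      by (simp add: Aop_def Let_def c1_def c2_def W_def S_def)
  next
    case False
    have "\<bar>4 * W (i, j) - W (i + 1, j) - W (i - 1, j) - W (i, j + 1) - W (i, j - 1)\<bar> \<le> 6 * S"
    proof -
      have Se: "S = \<bar>W (i,j)\<bar> + \<bar>W (i+1,j)\<bar> + \<bar>W (i-1,j)\<bar> + \<bar>W (i,j+1)\<bar> + \<bar>W (i,j-1)\<bar>"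
        using p by (simp add: S_def s1_def s2_def s3_def s4_def)
      have t: "\<bar>4*A - B - C - D - E\<bar> \<le> 6*(\<bar>A\<bar> + \<bar>B\<bar> + \<bar>C\<bar> + \<bar>D\<bar> + \<bar>E\<bar>)" for A B C D E :: real by (smt (verit))
      show ?thesis using t Se by simp
    qed
    from num[OF this] show ?thesis using False p
      by (simp add: Aop_def Let_def W_def S_def)
  qed
qed


lemma amgm2: "a*b \<le> (a\<^sup>2 + (b::real)\<^sup>2)/2"
proof -
  have "0 \<le> (a - b)\<^sup>2" by simp
  then show ?thesis by (simp add: power2_eq_square algebra_simps)
qed

lemma lin5: "(a0::real) = x \<Longrightarrow> a1 \<le> (x + y1)/2 \<Longrightarrow> a2 \<le> (x + y2)/2 \<Longrightarrow> a3 \<le> (x + y3)/2 \<Longrightarrow> a4 \<le> (x + y4)/2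
  \<Longrightarrow> 0 \<le> y1 \<Longrightarrow> 0 \<le> y2 \<Longrightarrow> 0 \<le> y3 \<Longrightarrow> 0 \<le> y4 \<Longrightarrow> a0 + a1 + a2 + a3 + a4 \<le> 3 * x + y1 + y2 + y3 + y4"
  unfolding add_divide_distrib by linarith

lemma pt_bound:
  fixes a b1 b2 b3 b4 c X Y :: real
  assumes "\<bar>Y\<bar> \<le> c * (\<bar>X\<bar> + b1 + b2 + b3 + b4)" "c \<ge> 0" "b1 \<ge> 0" "b2 \<ge> 0" "b3 \<ge> 0" "b4 \<ge> 0"
  shows "X * Y \<ge> - (c * (3 * X\<^sup>2 + b1\<^sup>2 + b2\<^sup>2 + b3\<^sup>2 + b4\<^sup>2))"
proof -
  have "\<bar>X\<bar> * \<bar>Y\<bar> \<le> \<bar>X\<bar> * (c * (\<bar>X\<bar> + b1 + b2 + b3 + b4))"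
    using assms(1) by (simp add: mult_left_mono)
  also have "\<dots> = c * (\<bar>X\<bar> * \<bar>X\<bar> + \<bar>X\<bar> * b1 + \<bar>X\<bar> * b2 + \<bar>X\<bar> * b3 + \<bar>X\<bar> * b4)"
    by (simp add: algebra_simps)
  also have "\<dots> \<le> c * (3 * X\<^sup>2 + b1\<^sup>2 + b2\<^sup>2 + b3\<^sup>2 + b4\<^sup>2)"
  proof (rule mult_left_mono[OF _ assms(2)])
    have xx: "\<bar>X\<bar> * \<bar>X\<bar> = X\<^sup>2" by (simp add: power2_eq_square)
    have bb: "\<bar>X\<bar> * b \<le> (X\<^sup>2 + b\<^sup>2)/2" for b using amgm2[of "\<bar>X\<bar>" b] by simp
    show "\<bar>X\<bar> * \<bar>X\<bar> + \<bar>X\<bar> * b1 + \<bar>X\<bar> * b2 + \<bar>X\<bar> * b3 + \<bar>X\<bar> * b4 \<le> 3 * X\<^sup>2 + b1\<^sup>2 + b2\<^sup>2 + b3\<^sup>2 + b4\<^sup>2"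
      by (rule lin5[OF xx bb[of b1] bb[of b2] bb[of b3] bb[of b4]]) simp_all
  qed
  finally have "\<bar>X\<bar> * \<bar>Y\<bar> \<le> c * (3 * X\<^sup>2 + b1\<^sup>2 + b2\<^sup>2 + b3\<^sup>2 + b4\<^sup>2)" .
  moreover have "- (\<bar>X\<bar> * \<bar>Y\<bar>) \<le> X * Y" by (metis abs_ge_minus_self abs_mult minus_le_iff)
  ultimately show ?thesis by linarith
qed

lemma quad_bound:
  assumes h: "h > 0" and lb: "\<forall>j\<in>{1..N-1}. \<bar>lam j t\<bar> \<le> 1/2"
  shows "(\<Sum>p\<in>interior M N. v p * Aop h M N lam t v p) \<ge> - (42 / h\<^sup>2 * (\<Sum>p\<in>interior M N. (v p)\<^sup>2))"
proof -
  define I where "I = interior M N"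
  define W where "W = ext0 M N v"
  define c where "c = 6 / h\<^sup>2"
  have c0: "c \<ge> 0" by (simp add: c_def)
  have pw: "v p * Aop h M N lam t v p \<ge> - (c * (3 * (v p)\<^sup>2 + (W (s1 p))\<^sup>2 + (W (s2 p))\<^sup>2 + (W (s3 p))\<^sup>2 + (W (s4 p))\<^sup>2))"
    if p: "p \<in> I" for p
  proof -
    have "snd p \<in> {1..N-1}" using p by (auto simp: I_def interior_def)
    then have "\<bar>lam (snd p) t\<bar> \<le> 1/2" using lb by blast
    from Aop_bound[where p=p and lam=lam and t=t, OF h this, of M N v]
    have "\<bar>Aop h M N lam t v p\<bar> \<le> c * (\<bar>v p\<bar> + \<bar>W (s1 p)\<bar> + \<bar>W (s2 p)\<bar> + \<bar>W (s3 p)\<bar> + \<bar>W (s4 p)\<bar>)"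
      using p by (simp add: ext0_in I_def W_def c_def)
    from pt_bound[OF this c0] show ?thesis by simp
  qed
  have "(\<Sum>p\<in>I. v p * Aop h M N lam t v p) \<ge> (\<Sum>p\<in>I. - (c * (3 * (v p)\<^sup>2 + (W (s1 p))\<^sup>2 + (W (s2 p))\<^sup>2 + (W (s3 p))\<^sup>2 + (W (s4 p))\<^sup>2)))"
    by (rule sum_mono) (use pw in auto)
  also have "(\<Sum>p\<in>I. - (c * (3 * (v p)\<^sup>2 + (W (s1 p))\<^sup>2 + (W (s2 p))\<^sup>2 + (W (s3 p))\<^sup>2 + (W (s4 p))\<^sup>2)))
     = - (c * (3 * (\<Sum>p\<in>I. (v p)\<^sup>2) + (\<Sum>p\<in>I. (W (s1 p))\<^sup>2) + (\<Sum>p\<in>I. (W (s2 p))\<^sup>2) + (\<Sum>p\<in>I. (W (s3 p))\<^sup>2) + (\<Sum>p\<in>I. (W (s4 p))\<^sup>2)))"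
  proof -
    have "(\<Sum>p\<in>I. 3 * (v p)\<^sup>2 + (W (s1 p))\<^sup>2 + (W (s2 p))\<^sup>2 + (W (s3 p))\<^sup>2 + (W (s4 p))\<^sup>2)
      = 3 * (\<Sum>p\<in>I. (v p)\<^sup>2) + (\<Sum>p\<in>I. (W (s1 p))\<^sup>2) + (\<Sum>p\<in>I. (W (s2 p))\<^sup>2) + (\<Sum>p\<in>I. (W (s3 p))\<^sup>2) + (\<Sum>p\<in>I. (W (s4 p))\<^sup>2)"
      by (simp add: sum.distrib sum_distrib_left)
    then show ?thesis by (simp add: sum_negf sum_distrib_left[symmetric])
  qed
  also have "\<dots> \<ge> - (c * (7 * (\<Sum>p\<in>I. (v p)\<^sup>2)))"
    using shift_sum_ext[OF shifts_inj(1), of M N v] shift_sum_ext[OF shifts_inj(2), of M N v]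
      shift_sum_ext[OF shifts_inj(3), of M N v] shift_sum_ext[OF shifts_inj(4), of M N v] c0
    unfolding I_def W_def by (intro neg_le_iff_le[THEN iffD2] mult_left_mono) auto
  finally show ?thesis by (simp add: I_def c_def)
qed


definition CE :: "real \<Rightarrow> nat \<Rightarrow> nat \<Rightarrow> real \<Rightarrow> real" where
  "CE h M N T = sqrt (real (card (interior M N)) * T * exp ((84 / h\<^sup>2 + 1) * T))"

lemma exp_deriv: "((\<lambda>s. exp (- k * s)) has_real_derivative (- k * exp (- k * t))) (at t within S)"
  by (auto intro!: derivative_eq_intros)

lemma energy:
  fixes W g :: "real \<Rightarrow> nat \<times> nat \<Rightarrow> real" and mu :: "nat \<Rightarrow> real \<Rightarrow> real"
  assumes h: "h > 0" and T: "T \<ge> 0"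
    and mu: "\<forall>t\<in>{0..T}. \<forall>j\<in>{1..N-1}. \<bar>mu j t\<bar> \<le> 1/2"
    and W0: "\<forall>p\<in>interior M N. W 0 p = 0"
    and der: "\<forall>p\<in>interior M N. \<forall>t\<in>{0..T}. ((\<lambda>s. W s p) has_real_derivative g t p) (at t within {0..})"
    and fb: "\<forall>p\<in>interior M N. \<forall>t\<in>{0..T}. \<bar>g t p + Aop h M N mu t (W t) p\<bar> \<le> c"
    and c: "c \<ge> 0"
  shows "\<forall>p\<in>interior M N. \<forall>t\<in>{0..T}. \<bar>W t p\<bar> \<le> CE h M N T * c"
proof -
  define I where "I = interior M N"
  define n where "n = real (card I)"
  define k where "k = 84 / h\<^sup>2 + 1"
  define E where "E s = (\<Sum>p\<in>I. W s p * W s p)" for s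
  define E' where "E' t = (\<Sum>p\<in>I. 2 * W t p * g t p)" for t
  have fI: "finite I" by (simp add: I_def finite_interior)
  have k0: "k \<ge> 0" by (simp add: k_def)
  have n0: "n \<ge> 0" by (simp add: n_def)
  have dE: "(E has_real_derivative E' t) (at t within {0..})" if t: "t \<in> {0..T}" for t
  proof -
    have "((\<lambda>s. \<Sum>p\<in>I. W s p * W s p) has_real_derivative (\<Sum>p\<in>I. g t p * W t p + g t p * W t p)) (at t within {0..})"
      apply (rule DERIV_sum) apply (rule DERIV_mult) using der t by (auto simp: I_def)
    then show ?thesis unfolding E_def E'_def by (simp add: algebra_simps)
  qed
  have E'le: "E' t \<le> k * E t + n * c\<^sup>2" if t: "t \<in> {0..T}" for t
  proof -
    define a where "a p = g t p + Aop h M N mu t (W t) p" for p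
    have "E' t = (\<Sum>p\<in>I. 2 * W t p * a p) - 2 * (\<Sum>p\<in>I. W t p * Aop h M N mu t (W t) p)"
      unfolding E'_def a_def by (simp add: algebra_simps sum_subtractf sum_distrib_left sum.distrib)
    moreover have "(\<Sum>p\<in>I. 2 * W t p * a p) \<le> (\<Sum>p\<in>I. W t p * W t p + c\<^sup>2)"
    proof (rule sum_mono)
      fix p assume p: "p \<in> I"
      have "\<bar>a p\<bar> \<le> c" using fb p t by (simp add: a_def I_def)
      then have "(a p)\<^sup>2 \<le> c\<^sup>2" using abs_le_square_iff[of "a p" c] c by simp
      moreover have "2 * W t p * a p \<le> W t p * W t p + (a p)\<^sup>2"
        using amgm2[of "W t p" "a p"] by (simp add: power2_eq_square)
      ultimately show "2 * W t p * a p \<le> W t p * W t p + c\<^sup>2" by linarith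
    qed
    moreover have "(\<Sum>p\<in>I. W t p * Aop h M N mu t (W t) p) \<ge> - (42 / h\<^sup>2 * E t)"
    proof -
      have "(\<Sum>p\<in>I. (W t p)\<^sup>2) = E t" by (simp add: E_def power2_eq_square)
      then show ?thesis using quad_bound[OF h, of N mu t "W t" M] mu t by (simp add: I_def)
    qed
    moreover have "(\<Sum>p\<in>I. W t p * W t p + c\<^sup>2) = E t + n * c\<^sup>2"
      by (simp add: E_def n_def sum.distrib)
    ultimately have "E' t \<le> E t + n * c\<^sup>2 + 2 * (42 / h\<^sup>2 * E t)" by linarith
    then show ?thesis by (simp add: k_def algebra_simps)
  qed
  define \<phi> where "\<phi> s = exp (- k * s) * E s - n * c\<^sup>2 * s" for s
  have dphi: "(\<phi> has_real_derivative (exp (- k * t) * E' t + (- k * exp (- k * t)) * E t - n * c\<^sup>2)) (at t within {0..})"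
    if t: "t \<in> {0..T}" for t
  proof -
    have "((\<lambda>s. exp (- k * s) * E s - n * c\<^sup>2 * s) has_real_derivative
        (- k * exp (- k * t)) * E t + E' t * exp (- k * t) - n * c\<^sup>2 * 1) (at t within {0..})"
      by (intro DERIV_diff DERIV_mult exp_deriv dE[OF t] DERIV_cmult DERIV_ident)
    then show ?thesis unfolding \<phi>_def by (simp add: algebra_simps)
  qed
  have dphi_le: "exp (- k * t) * E' t + (- k * exp (- k * t)) * E t - n * c\<^sup>2 \<le> 0" if t: "t \<in> {0..T}" for t
  proof -
    have "exp (- k * t) * E' t \<le> exp (- k * t) * (k * E t + n * c\<^sup>2)"
      using E'le[OF t] by (intro mult_left_mono) auto
    moreover have "exp (- k * t) \<le> 1" using t k0 by simp
    moreover have "n * c\<^sup>2 \<ge> 0" using n0 by simp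
    moreover have "exp (- k * t) * (n * c\<^sup>2) \<le> n * c\<^sup>2"
      using calculation(2,3) by (simp add: mult_left_le_one_le)
    ultimately have "exp (- k * t) * E' t \<le> k * exp (- k * t) * E t + n * c\<^sup>2"
      by (simp add: algebra_simps)
    then show ?thesis by (simp add: algebra_simps)
  qed
  have phi_le: "\<phi> t \<le> 0" if t: "t \<in> {0..T}" for t
  proof -
    have "\<phi> 0 = 0" using W0 by (simp add: \<phi>_def E_def I_def)
    moreover have "\<phi> t \<le> \<phi> 0"
    proof (rule DERIV_nonpos_imp_decreasing_open[of 0 t \<phi>])
      show "0 \<le> t" using t by simp
      show "continuous_on {0..t} \<phi>"
      proof -
        have "continuous_on {0..T} \<phi>"
          by (rule DERIV_continuous_on[where D="\<lambda>t. exp (- k * t) * E' t + (- k * exp (- k * t)) * E t - n * c\<^sup>2"])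
             (rule DERIV_subset[OF dphi], auto)
        then show ?thesis by (rule continuous_on_subset) (use t in auto)
      qed
      fix x assume x: "0 < x" "x < t"
      then have xT: "x \<in> {0..T}" using t by auto
      have "Elementary_Topology.interior {0::real..} = {0<..}" by (rule interior_Ici[of "-1"]) simp
      then have "at x within {0..} = at x" using x by (intro at_within_interior) simp
      then show "\<exists>y. (\<phi> has_real_derivative y) (at x) \<and> y \<le> 0"
        using dphi[OF xT] dphi_le[OF xT] by auto
    qed
    ultimately show ?thesis by simp
  qed
  have Ebound: "E t \<le> n * c\<^sup>2 * T * exp (k * T)" if t: "t \<in> {0..T}" for t
  proof -
    have "exp (- k * t) * E t \<le> n * c\<^sup>2 * t" using phi_le[OF t] by (simp add: \<phi>_def)
    then have "E t \<le> n * c\<^sup>2 * t * exp (k * t)"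
      by (simp add: exp_minus field_simps)
    also have "\<dots> \<le> n * c\<^sup>2 * T * exp (k * T)"
      using t n0 k0 by (intro mult_mono) (auto intro: mult_left_mono)
    finally show ?thesis .
  qed
  show ?thesis
  proof (intro ballI)
    fix p t assume p: "p \<in> interior M N" and t: "t \<in> {0..T}"
    have "(W t p)\<^sup>2 \<le> E t"
      unfolding E_def power2_eq_square
      by (rule member_le_sum) (use p fI in \<open>auto simp: I_def\<close>)
    also have "\<dots> \<le> (CE h M N T * c)\<^sup>2"
      using Ebound[OF t] n0 T by (simp add: CE_def power_mult_distrib n_def I_def k_def algebra_simps)
    finally have "(W t p)\<^sup>2 \<le> (CE h M N T * c)\<^sup>2" .
    moreover have "CE h M N T * c \<ge> 0" using c T unfolding CE_def by (intro mult_nonneg_nonneg real_sqrt_ge_zero) auto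
    ultimately show "\<bar>W t p\<bar> \<le> CE h M N T * c" using abs_le_square_iff[of "W t p" "CE h M N T * c"] by simp
  qed
qed


lemma pnorm_ge:
  assumes "x \<in> pspace N" "j \<in> {1..N-1}" "t \<ge> 0"
  shows "\<bar>x j t\<bar> \<le> pnorm N x"
proof -
  have "bounded (x j ` {0..})" using assms by (simp add: pspace_def)
  then obtain B where B: "\<forall>s\<in>{0..}. \<bar>x j s\<bar> \<le> B" by (auto simp: bounded_real)
  have "\<bar>x j t\<bar> \<le> (SUP s\<in>{0::real..}. \<bar>x j s\<bar>)"
  proof (rule cSUP_upper)
    show "t \<in> {0..}" using assms by simp
    show "bdd_above ((\<lambda>s. \<bar>x j s\<bar>) ` {0..})" using B by (intro bdd_aboveI[where M=B]) auto
  qed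
  also have "\<dots> \<le> pnorm N x" unfolding pnorm_def
    by (rule Max_ge) (use assms in auto)
  finally show ?thesis .
qed

lemma pnorm_le:
  assumes "N \<ge> 2" "\<forall>j\<in>{1..N-1}. \<forall>t\<ge>0. \<bar>x j t\<bar> \<le> B"
  shows "pnorm N x \<le> B"
  unfolding pnorm_def
proof (subst Max_le_iff)
  show "finite ((\<lambda>j. SUP t\<in>{0::real..}. \<bar>x j t\<bar>) ` {1..N - 1})" by simp
  show "(\<lambda>j. SUP t\<in>{0::real..}. \<bar>x j t\<bar>) ` {1..N - 1} \<noteq> {}" using assms by auto
  show "\<forall>a\<in>(\<lambda>j. SUP t\<in>{0::real..}. \<bar>x j t\<bar>) ` {1..N - 1}. a \<le> B"
    using assms by (auto intro!: cSUP_least)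
qed

lemma pnorm_nonneg: "N \<ge> 2 \<Longrightarrow> x \<in> pspace N \<Longrightarrow> pnorm N x \<ge> 0"
proof -
  assume a: "N \<ge> 2" "x \<in> pspace N"
  have "(1::nat) \<in> {1..N-1}" using a by auto
  from pnorm_ge[OF a(2) this, of 0] show ?thesis by linarith
qed

lemma pnorm_scale:
  assumes "N \<ge> 2" "x \<in> pspace N"
  shows "pnorm N (\<lambda>j t. c * x j t) \<le> \<bar>c\<bar> * pnorm N x"
proof (rule pnorm_le[OF assms(1)], intro ballI allI impI)
  fix j t assume "j \<in> {1..N-1}" "(t::real) \<ge> 0"
  from pnorm_ge[OF assms(2) this] show "\<bar>c * x j t\<bar> \<le> \<bar>c\<bar> * pnorm N x" by (simp add: abs_mult mult_left_mono)
qed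

lemma pnorm_div:
  assumes "N \<ge> 2" "x \<in> pspace N"
  shows "pnorm N (\<lambda>j t. x j t / c) \<le> pnorm N x / \<bar>c\<bar>"
proof -
  have "(\<lambda>j t. x j t / c) = (\<lambda>j t. inverse c * x j t)" by (simp add: divide_inverse mult.commute)
  then show ?thesis using pnorm_scale[OF assms, of "inverse c"] by (simp add: divide_inverse mult.commute)
qed

lemma pspace_lin:
  assumes "x \<in> pspace N" "y \<in> pspace N"
  shows "(\<lambda>j t. a * x j t + b * y j t) \<in> pspace N"
  unfolding pspace_def
proof (intro CollectI ballI conjI)
  fix j assume j: "j \<in> {1..N-1}"
  show "continuous_on {0..} (\<lambda>t. a * x j t + b * y j t)"
    using assms j by (auto simp: pspace_def intro!: continuous_intros)
  obtain A where A: "\<forall>s\<in>{0..}. \<bar>x j s\<bar> \<le> A" using assms j unfolding pspace_def bounded_real by blast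
  obtain B where B: "\<forall>s\<in>{0..}. \<bar>y j s\<bar> \<le> B" using assms j unfolding pspace_def bounded_real by blast
  show "bounded ((\<lambda>t. a * x j t + b * y j t) ` {0..})"
    unfolding bounded_real
  proof (intro exI ballI)
    fix z assume "z \<in> (\<lambda>t. a * x j t + b * y j t) ` {0..}"
    then obtain s where s: "s \<in> {0..}" "z = a * x j s + b * y j s" by auto
    have "\<bar>a * x j s\<bar> \<le> \<bar>a\<bar> * A" using A s by (simp add: abs_mult mult_left_mono)
    moreover have "\<bar>b * y j s\<bar> \<le> \<bar>b\<bar> * B" using B s by (simp add: abs_mult mult_left_mono)
    ultimately show "\<bar>z\<bar> \<le> \<bar>a\<bar> * A + \<bar>b\<bar> * B" using s abs_triangle_ineq[of "a * x j s" "b * y j s"] by linarith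
  qed
qed

lemma pspace_div:
  assumes "x \<in> pspace N" shows "(\<lambda>j t. x j t / c) \<in> pspace N"
proof -
  have eq: "(\<lambda>j t. x j t / c) = (\<lambda>j t. inverse c * x j t + 0 * x j t)" by (simp add: divide_inverse mult.commute)
  show ?thesis by (subst eq) (rule pspace_lin[OF assms assms])
qed

lemma zero_pspace: "(\<lambda>j t. 0) \<in> pspace N"
  by (auto simp: pspace_def bounded_real)

lemma zero_Wh: "N \<ge> 2 \<Longrightarrow> (\<lambda>j t. 0) \<in> Wh N"
  using pnorm_le[of N "\<lambda>j t. 0" 0] by (simp add: Wh_def zero_pspace)

lemma Wh_div:
  assumes "N \<ge> 2" "x \<in> pspace N" "pnorm N x / \<bar>c\<bar> < 1/2"
  shows "(\<lambda>j t. x j t / c) \<in> Wh N"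
proof -
  have "pnorm N (\<lambda>j t. x j t / c) < 1/2" using pnorm_div[OF assms(1,2), of c] assms(3) by (rule le_less_trans)
  then show ?thesis using pspace_div[OF assms(2), of c] by (simp add: Wh_def)
qed

lemma Wh_bound: "N \<ge> 2 \<Longrightarrow> x \<in> Wh N \<Longrightarrow> j \<in> {1..N-1} \<Longrightarrow> t \<ge> 0 \<Longrightarrow> \<bar>x j t\<bar> \<le> pnorm N x \<and> pnorm N x < 1/2"
  using pnorm_ge[of x N j t] by (simp add: Wh_def)



lemma absmul: "\<bar>p\<bar> \<le> P \<Longrightarrow> \<bar>a\<bar> \<le> (A::real) \<Longrightarrow> \<bar>p * a\<bar> \<le> P * A"
  by (simp add: abs_mult mult_mono')

lemma coefA:
  fixes x :: real assumes "\<bar>x\<bar> \<le> 1/2"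
  shows "\<bar>2/(1+x) - 2\<bar> \<le> 4 * \<bar>x\<bar>" and "\<bar>2/(1+x) - 2 + 2*x\<bar> \<le> 4 * x\<^sup>2"
proof -
  have p: "1 + x \<ge> 1/2" using assms by auto
  then have nz: "1 + x > 0" by simp
  have e1: "2/(1+x) - 2 = - 2 * x / (1+x)" using nz by (simp add: field_simps)
  have "\<bar>x\<bar> * (1/2) \<le> \<bar>x\<bar> * (1 + x)" using p by (intro mult_left_mono) auto
  then have "2 * \<bar>x\<bar> \<le> 4 * \<bar>x\<bar> * (1 + x)" by simp
  then show "\<bar>2/(1+x) - 2\<bar> \<le> 4 * \<bar>x\<bar>" unfolding e1 using nz
    by (simp add: abs_divide abs_mult pos_divide_le_eq)
  have e2: "2/(1+x) - 2 + 2*x = 2 * x\<^sup>2 / (1+x)" using nz by (simp add: field_simps power2_eq_square)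
  have "x\<^sup>2 * (1/2) \<le> x\<^sup>2 * (1 + x)" using p by (intro mult_left_mono) auto
  then have "2 * x\<^sup>2 \<le> 4 * x\<^sup>2 * (1 + x)" by (simp add: algebra_simps)
  then show "\<bar>2/(1+x) - 2 + 2*x\<bar> \<le> 4 * x\<^sup>2" unfolding e2 using nz
    by (simp add: abs_divide pos_divide_le_eq)
qed

lemma coefB:
  fixes x :: real assumes "\<bar>x\<bar> \<le> 1/2"
  shows "\<bar>2/(2+x) - 1\<bar> \<le> \<bar>x\<bar>" and "\<bar>2/(2+x) - 1 + x/2\<bar> \<le> x\<^sup>2"
proof -
  have p: "2 + x \<ge> 1" using assms by auto
  then have nz: "2 + x > 0" by simp
  have e1: "2/(2+x) - 1 = - x / (2+x)" using nz by (simp add: field_simps)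
  have "\<bar>x\<bar> * 1 \<le> \<bar>x\<bar> * (2 + x)" using p by (intro mult_left_mono) auto
  then show "\<bar>2/(2+x) - 1\<bar> \<le> \<bar>x\<bar>" unfolding e1 using nz
    by (simp add: abs_divide pos_divide_le_eq)
  have e2: "2/(2+x) - 1 + x/2 = x\<^sup>2 / (2 * (2+x))" using nz by (simp add: field_simps power2_eq_square)
  have "x\<^sup>2 * 1 \<le> x\<^sup>2 * (2 * (2 + x))" using p by (intro mult_left_mono) auto
  then show "\<bar>2/(2+x) - 1 + x/2\<bar> \<le> x\<^sup>2" unfolding e2 using nz
    by (simp add: abs_divide pos_divide_le_eq)
qed

lemma Q_first:
  fixes x d a b B :: real
  assumes "\<bar>x\<bar> \<le> d" "d \<le> 1/2" "\<bar>a\<bar> \<le> B" "\<bar>b\<bar> \<le> B"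
  shows "\<bar>(2/(1+x) - 2) * a - (2/(2+x) - 1) * b\<bar> \<le> 5 * B * d"
proof -
  have x: "\<bar>x\<bar> \<le> 1/2" using assms by linarith
  have "\<bar>(2/(1+x) - 2) * a\<bar> \<le> (4 * d) * B" using coefA(1)[OF x] assms by (intro absmul) auto
  moreover have "\<bar>(2/(2+x) - 1) * b\<bar> \<le> d * B" using coefB(1)[OF x] assms by (intro absmul) auto
  moreover have "\<bar>(2/(1+x) - 2) * a - (2/(2+x) - 1) * b\<bar> \<le> \<bar>(2/(1+x) - 2) * a\<bar> + \<bar>(2/(2+x) - 1) * b\<bar>"
    by (rule abs_triangle_ineq4)
  moreover have "4 * d * B + d * B = 5 * B * d" by (simp add: algebra_simps)
  ultimately show ?thesis by linarith
qed

lemma Q_second: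
  fixes x d a0 a1 b0 b1 B C :: real
  assumes "\<bar>x\<bar> \<le> d" "d \<le> 1/2" "\<bar>a0\<bar> \<le> B" "\<bar>b0\<bar> \<le> B" "\<bar>a1\<bar> \<le> C * d" "\<bar>b1\<bar> \<le> C * d"
  shows "\<bar>((2/(1+x) - 2) * (a0 + a1) - (2/(2+x) - 1) * (b0 + b1)) - (-2 * x * a0 + x / 2 * b0)\<bar>
           \<le> (5 * B + 5 * C) * d\<^sup>2"
proof -
  have x: "\<bar>x\<bar> \<le> 1/2" using assms by linarith
  have xd: "x\<^sup>2 \<le> d\<^sup>2" using assms(1) by (metis abs_le_square_iff abs_of_nonneg abs_ge_zero order_trans power2_abs)
  have e0: "\<And>\<alpha> \<beta>::real. ((\<alpha> - 2) * (a0 + a1) - (\<beta> - 1) * (b0 + b1)) - (-2 * x * a0 + x / 2 * b0)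
    = (\<alpha> - 2 + 2*x) * a0 + (\<alpha> - 2) * a1 - (\<beta> - 1 + x/2) * b0 - (\<beta> - 1) * b1"
    by (simp add: algebra_simps)
  note e = e0[of "2/(1+x)" "2/(2+x)"]
  have t1: "\<bar>(2/(1+x) - 2 + 2*x) * a0\<bar> \<le> (4 * d\<^sup>2) * B" using coefA(2)[OF x] xd assms by (intro absmul) auto
  have t2: "\<bar>(2/(1+x) - 2) * a1\<bar> \<le> (4 * d) * (C * d)" using coefA(1)[OF x] assms by (intro absmul) auto
  have t3: "\<bar>(2/(2+x) - 1 + x/2) * b0\<bar> \<le> d\<^sup>2 * B" using coefB(2)[OF x] xd assms by (intro absmul) auto
  have t4: "\<bar>(2/(2+x) - 1) * b1\<bar> \<le> d * (C * d)" using coefB(1)[OF x] assms by (intro absmul) auto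
  have s: "(4 * d\<^sup>2) * B + (4 * d) * (C * d) + d\<^sup>2 * B + d * (C * d) = (5 * B + 5 * C) * d\<^sup>2"
    by (simp add: algebra_simps power2_eq_square)
  have tri: "\<bar>A + B - C - D\<bar> \<le> \<bar>A\<bar> + \<bar>B\<bar> + \<bar>C\<bar> + \<bar>D\<bar>" for A B C D :: real by linarith
  show ?thesis unfolding e using tri[of "(2/(1+x) - 2 + 2*x) * a0" "(2/(1+x) - 2) * a1" "(2/(2+x) - 1 + x/2) * b0" "(2/(2+x) - 1) * b1"] t1 t2 t3 t4 s by linarith
qed


lemma Aop_lin3: "Aop h M N lam t (\<lambda>p. c1 * (v1 p - w p) + c2 * (v2 p - w p) + c3 * (v3 p - w p)) p
  = c1 * (Aop h M N lam t v1 p - Aop h M N lam t w p) + c2 * (Aop h M N lam t v2 p - Aop h M N lam t w p)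
    + c3 * (Aop h M N lam t v3 p - Aop h M N lam t w p)"
proof -
  have "(\<lambda>p. c1 * (v1 p - w p) + c2 * (v2 p - w p) + c3 * (v3 p - w p))
     = (\<lambda>p. 1 * (\<lambda>p. c1 * (\<lambda>p. v1 p - w p) p + c2 * (\<lambda>p. v2 p - w p) p) p + c3 * (\<lambda>p. v3 p - w p) p)"
    by simp
  then show ?thesis by (simp only: Aop_lin Aop_diff) simp
qed

locale heatsetup =
  fixes h T :: real and M N :: nat and F :: "real \<Rightarrow> nat \<times> nat \<Rightarrow> real" and u0 :: "nat \<times> nat \<Rightarrow> real"
    and u :: "(nat \<Rightarrow> real \<Rightarrow> real) \<Rightarrow> real \<Rightarrow> nat \<times> nat \<Rightarrow> real"
  assumes h: "h > 0" and M: "M \<ge> 2" and N: "N \<ge> 2" and T: "T > 0"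
    and sol: "\<forall>lam\<in>Wh N. solves h M N F u0 lam (u lam)"
begin

abbreviation Z :: "nat \<Rightarrow> real \<Rightarrow> real" where "Z \<equiv> (\<lambda>j t. 0)"

lemma ZWh: "Z \<in> Wh N" using zero_Wh[OF N] .

lemma sol0: "lam \<in> Wh N \<Longrightarrow> p \<in> interior M N \<Longrightarrow> u lam 0 p = u0 p"
  using sol by (simp add: solves_def)

lemma solD: "lam \<in> Wh N \<Longrightarrow> p \<in> interior M N \<Longrightarrow> t \<ge> 0 \<Longrightarrow>
   ((\<lambda>s. u lam s p) has_real_derivative (F t p - Aop h M N lam t (u lam t) p)) (at t within {0..})"
  using sol by (simp add: solves_def)

lemma bddZ: "\<exists>B\<ge>0. \<forall>p\<in>interior M N. \<forall>t\<in>{0..T}. \<bar>u Z t p\<bar> \<le> B"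
proof -
  have cont: "continuous_on {0..T} (\<lambda>t. u Z t p)" if p: "p \<in> interior M N" for p
    by (rule DERIV_continuous_on, rule DERIV_subset[OF solD[OF ZWh p]]) auto
  have "continuous_on {0..T} (\<lambda>t. \<Sum>p\<in>interior M N. \<bar>u Z t p\<bar>)"
    using cont by (intro continuous_intros) auto
  then have "bounded ((\<lambda>t. \<Sum>p\<in>interior M N. \<bar>u Z t p\<bar>) ` {0..T})"
    by (intro compact_imp_bounded compact_continuous_image) auto
  then obtain a where a: "\<forall>t\<in>{0..T}. \<bar>\<Sum>p\<in>interior M N. \<bar>u Z t p\<bar>\<bar> \<le> a"
    unfolding bounded_real by auto
  have "\<bar>u Z t p\<bar> \<le> max a 0" if "p \<in> interior M N" "t \<in> {0..T}" for p t
  proof -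
    have "\<bar>u Z t p\<bar> \<le> (\<Sum>p\<in>interior M N. \<bar>u Z t p\<bar>)"
      by (rule member_le_sum) (use that finite_interior in auto)
    also have "\<dots> \<le> a" using a that by auto
    finally show ?thesis by simp
  qed
  then show ?thesis by (intro exI[of _ "max a 0"]) auto
qed

definition BZ where "BZ = (SOME B. B \<ge> 0 \<and> (\<forall>p\<in>interior M N. \<forall>t\<in>{0..T}. \<bar>u Z t p\<bar> \<le> B))"

lemma BZ: "BZ \<ge> 0" "\<forall>p\<in>interior M N. \<forall>t\<in>{0..T}. \<bar>u Z t p\<bar> \<le> BZ"
  using someI_ex[OF bddZ] unfolding BZ_def by auto

lemma BZ_ext: "t \<in> {0..T} \<Longrightarrow> \<bar>ext0 M N (u Z t) q\<bar> \<le> BZ"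
  using BZ by (auto simp: ext0_def)

lemma Qop_bound:
  assumes "\<bar>lam (snd p) t\<bar> \<le> d" "d \<le> 1/2" "\<forall>q. \<bar>ext0 M N v q\<bar> \<le> B"
  shows "\<bar>Qop h M N lam t v p\<bar> \<le> 5 * B / h\<^sup>2 * d"
proof (cases "fst p = 1")
  case True
  have "\<bar>(2/(1+lam (snd p) t) - 2) * ext0 M N v (1, snd p) - (2/(2+lam (snd p) t) - 1) * ext0 M N v (2, snd p)\<bar>
     \<le> 5 * B * d" by (rule Q_first) (use assms in auto)
  then have "\<bar>(2/(1+lam (snd p) t) - 2) * ext0 M N v (1, snd p) - (2/(2+lam (snd p) t) - 1) * ext0 M N v (2, snd p)\<bar> / h\<^sup>2
     \<le> 5 * B * d / h\<^sup>2" by (intro divide_right_mono) auto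
  then show ?thesis using True by (simp add: Qop_def abs_divide)
next
  case False
  have "0 \<le> B" using assms(3) by (meson abs_ge_zero order_trans)
  moreover have "0 \<le> d" using assms(1) by (meson abs_ge_zero order_trans)
  ultimately show ?thesis using False by (simp add: Qop_def)
qed

definition C1 where "C1 = CE h M N T * (5 * BZ / h\<^sup>2)"

lemma V1:
  assumes lam: "lam \<in> Wh N"
  shows "\<forall>p\<in>interior M N. \<forall>t\<in>{0..T}. \<bar>u lam t p - u Z t p\<bar> \<le> C1 * pnorm N lam"
proof -
  define d where "d = pnorm N lam"
  have lb: "\<forall>j\<in>{1..N-1}. \<forall>t\<ge>0. \<bar>lam j t\<bar> \<le> d"
    using Wh_bound[OF N lam] unfolding d_def by blast
  have d2: "d < 1/2" using lam by (simp add: Wh_def d_def)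
  have d0: "d \<ge> 0" using pnorm_nonneg[OF N] lam by (simp add: d_def Wh_def)
  have "\<forall>p\<in>interior M N. \<forall>t\<in>{0..T}. \<bar>(\<lambda>s p. u lam s p - u Z s p) t p\<bar> \<le> CE h M N T * (5 * BZ / h\<^sup>2 * d)"
  proof (rule energy[OF h, where g="\<lambda>t p. (F t p - Aop h M N lam t (u lam t) p) - (F t p - Aop h M N Z t (u Z t) p)"
        and mu=lam])
    show "0 \<le> T" using T by simp
    show "\<forall>t\<in>{0..T}. \<forall>j\<in>{1..N - 1}. \<bar>lam j t\<bar> \<le> 1 / 2" using lb d2 by fastforce
    show "\<forall>p\<in>interior M N. u lam 0 p - u Z 0 p = 0" using sol0[OF lam] sol0[OF ZWh] by simp
    show "\<forall>p\<in>interior M N. \<forall>t\<in>{0..T}. ((\<lambda>s. u lam s p - u Z s p) has_real_derivative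
           (F t p - Aop h M N lam t (u lam t) p) - (F t p - Aop h M N Z t (u Z t) p)) (at t within {0..})"
    proof (intro ballI)
      fix p t assume p: "p \<in> interior M N" and t: "t \<in> {0..T}"
      show "((\<lambda>s. u lam s p - u Z s p) has_real_derivative
           (F t p - Aop h M N lam t (u lam t) p) - (F t p - Aop h M N Z t (u Z t) p)) (at t within {0..})"
        using t by (intro DERIV_diff solD[OF lam p] solD[OF ZWh p]) auto
    qed
    show "0 \<le> 5 * BZ / h\<^sup>2 * d" using BZ d0 by simp
    show "\<forall>p\<in>interior M N. \<forall>t\<in>{0..T}.
       \<bar>(F t p - Aop h M N lam t (u lam t) p) - (F t p - Aop h M N Z t (u Z t) p) + Aop h M N lam t (\<lambda>p. u lam t p - u Z t p) p\<bar>
       \<le> 5 * BZ / h\<^sup>2 * d"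
    proof (intro ballI)
      fix p t assume p: "p \<in> interior M N" and t: "t \<in> {0..T}"
      have "(F t p - Aop h M N lam t (u lam t) p) - (F t p - Aop h M N Z t (u Z t) p) + Aop h M N lam t (\<lambda>p. u lam t p - u Z t p) p
          = - Qop h M N lam t (u Z t) p"
        using Aop_diff[of h M N lam t "u lam t" "u Z t" p] Aop_split[of h M N lam t "u Z t" p] by simp
      moreover have "\<bar>Qop h M N lam t (u Z t) p\<bar> \<le> 5 * BZ / h\<^sup>2 * d"
        by (rule Qop_bound) (use lb d2 p t BZ_ext in \<open>auto simp: interior_def\<close>)
      ultimately show "\<bar>(F t p - Aop h M N lam t (u lam t) p) - (F t p - Aop h M N Z t (u Z t) p) + Aop h M N lam t (\<lambda>p. u lam t p - u Z t p) p\<bar>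
       \<le> 5 * BZ / h\<^sup>2 * d" by simp
    qed
  qed
  then show ?thesis by (simp add: C1_def d_def mult.assoc)
qed

end

context heatsetup begin

definition K2 where "K2 = (5 * BZ + 5 * C1) / h\<^sup>2"

definition Q1 where "Q1 lam t p = (if fst p = 1 then lam (snd p) t * (-2 * ext0 M N (u Z t) (1, snd p) + ext0 M N (u Z t) (2, snd p) / 2) / h\<^sup>2 else 0)"

lemma CE0: "CE h M N T \<ge> 0" using T unfolding CE_def by (intro real_sqrt_ge_zero) auto

lemma C10: "C1 \<ge> 0" using CE0 BZ by (simp add: C1_def)

lemma K20: "K2 \<ge> 0" using C10 BZ by (simp add: K2_def)

lemma Q_approx:
  assumes lam: "lam \<in> Wh N" and p: "p \<in> interior M N" and t: "t \<in> {0..T}"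
  shows "\<bar>Qop h M N lam t (u lam t) p - Q1 lam t p\<bar> \<le> K2 * (pnorm N lam)\<^sup>2"
proof (cases "fst p = 1")
  case True
  define d where "d = pnorm N lam"
  define j where "j = snd p"
  define x where "x = lam j t"
  define V where "V = (\<lambda>q. u lam t q - u Z t q)"
  have d0: "d \<ge> 0" using pnorm_nonneg[OF N] lam by (simp add: d_def Wh_def)
  have d2: "d \<le> 1/2" using lam by (simp add: Wh_def d_def)
  have jr: "j \<in> {1..N-1}" using p by (auto simp: j_def interior_def)
  have xd: "\<bar>x\<bar> \<le> d" using Wh_bound[OF N lam jr, of t] t by (simp add: x_def d_def)
  have split: "ext0 M N (u lam t) q = ext0 M N (u Z t) q + ext0 M N V q" for q
    by (simp add: ext0_def V_def)
  have Vb: "\<bar>ext0 M N V q\<bar> \<le> C1 * d" for q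
  proof (cases "q \<in> interior M N")
    case True then show ?thesis using V1[OF lam] t by (simp add: ext0_def V_def d_def)
  next
    case False then show ?thesis using C10 d0 by (simp add: ext0_def)
  qed
  have "\<bar>((2/(1+x) - 2) * (ext0 M N (u Z t) (1,j) + ext0 M N V (1,j)) - (2/(2+x) - 1) * (ext0 M N (u Z t) (2,j) + ext0 M N V (2,j)))
          - (-2 * x * ext0 M N (u Z t) (1,j) + x / 2 * ext0 M N (u Z t) (2,j))\<bar> \<le> (5 * BZ + 5 * C1) * d\<^sup>2"
    by (rule Q_second[OF xd d2 BZ_ext[OF t] BZ_ext[OF t] Vb Vb])
  then have "\<bar>((2/(1+x) - 2) * (ext0 M N (u Z t) (1,j) + ext0 M N V (1,j)) - (2/(2+x) - 1) * (ext0 M N (u Z t) (2,j) + ext0 M N V (2,j)))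
          - (-2 * x * ext0 M N (u Z t) (1,j) + x / 2 * ext0 M N (u Z t) (2,j))\<bar> / h\<^sup>2 \<le> (5 * BZ + 5 * C1) * d\<^sup>2 / h\<^sup>2"
    by (intro divide_right_mono) auto
  moreover have "Qop h M N lam t (u lam t) p - Q1 lam t p =
     (((2/(1+x) - 2) * (ext0 M N (u Z t) (1,j) + ext0 M N V (1,j)) - (2/(2+x) - 1) * (ext0 M N (u Z t) (2,j) + ext0 M N V (2,j)))
          - (-2 * x * ext0 M N (u Z t) (1,j) + x / 2 * ext0 M N (u Z t) (2,j))) / h\<^sup>2"
  proof -
    have q: "Qop h M N lam t (u lam t) p = ((2/(1+x) - 2) * (ext0 M N (u Z t) (1,j) + ext0 M N V (1,j)) - (2/(2+x) - 1) * (ext0 M N (u Z t) (2,j) + ext0 M N V (2,j))) / h\<^sup>2"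
      using True unfolding Qop_def split x_def j_def by simp
    have q1: "Q1 lam t p = (-2 * x * ext0 M N (u Z t) (1,j) + x / 2 * ext0 M N (u Z t) (2,j)) / h\<^sup>2"
    proof -
      have "x * (-2 * ext0 M N (u Z t) (1, j) + ext0 M N (u Z t) (2, j) / 2) = -2 * x * ext0 M N (u Z t) (1,j) + x / 2 * ext0 M N (u Z t) (2,j)"
        by (simp add: algebra_simps)
      then show ?thesis using True unfolding Q1_def x_def j_def by simp
    qed
    show ?thesis unfolding q q1 by (rule diff_divide_distrib[symmetric])
  qed
  ultimately show ?thesis by (simp add: abs_divide K2_def d_def)
next
  case False
  then show ?thesis using K20 by (simp add: Qop_def Q1_def)
qed

lemma V2:
  assumes l1: "l1 \<in> Wh N" and l2: "l2 \<in> Wh N" and l3: "l3 \<in> Wh N"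
    and canc: "\<forall>j\<in>{1..N-1}. \<forall>t\<ge>0. c1 * l1 j t + c2 * l2 j t + c3 * l3 j t = 0"
  shows "\<forall>p\<in>interior M N. \<bar>c1 * (u l1 T p - u Z T p) + c2 * (u l2 T p - u Z T p) + c3 * (u l3 T p - u Z T p)\<bar>
     \<le> CE h M N T * (K2 * (\<bar>c1\<bar> * (pnorm N l1)\<^sup>2 + \<bar>c2\<bar> * (pnorm N l2)\<^sup>2 + \<bar>c3\<bar> * (pnorm N l3)\<^sup>2))"
proof -
  define G where "G lam t p = F t p - Aop h M N lam t (u lam t) p" for lam t p
  define c where "c = K2 * (\<bar>c1\<bar> * (pnorm N l1)\<^sup>2 + \<bar>c2\<bar> * (pnorm N l2)\<^sup>2 + \<bar>c3\<bar> * (pnorm N l3)\<^sup>2)"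
  have "\<forall>p\<in>interior M N. \<forall>t\<in>{0..T}. \<bar>(\<lambda>s p. c1 * (u l1 s p - u Z s p) + c2 * (u l2 s p - u Z s p) + c3 * (u l3 s p - u Z s p)) t p\<bar>
     \<le> CE h M N T * c"
  proof (rule energy[OF h, where g="\<lambda>t p. c1 * (G l1 t p - G Z t p) + c2 * (G l2 t p - G Z t p) + c3 * (G l3 t p - G Z t p)"
        and mu=Z])
    show "0 \<le> T" using T by simp
    show "\<forall>t\<in>{0..T}. \<forall>j\<in>{1..N - 1}. \<bar>(0::real)\<bar> \<le> 1 / 2" by simp
    show "\<forall>p\<in>interior M N. c1 * (u l1 0 p - u Z 0 p) + c2 * (u l2 0 p - u Z 0 p) + c3 * (u l3 0 p - u Z 0 p) = 0"
      using sol0[OF l1] sol0[OF l2] sol0[OF l3] sol0[OF ZWh] by simp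
    show "\<forall>p\<in>interior M N. \<forall>t\<in>{0..T}. ((\<lambda>s. c1 * (u l1 s p - u Z s p) + c2 * (u l2 s p - u Z s p) + c3 * (u l3 s p - u Z s p))
       has_real_derivative c1 * (G l1 t p - G Z t p) + c2 * (G l2 t p - G Z t p) + c3 * (G l3 t p - G Z t p)) (at t within {0..})"
    proof (intro ballI)
      fix p t assume p: "p \<in> interior M N" and t: "t \<in> {0..T}"
      then have t0: "t \<ge> 0" by simp
      show "((\<lambda>s. c1 * (u l1 s p - u Z s p) + c2 * (u l2 s p - u Z s p) + c3 * (u l3 s p - u Z s p))
       has_real_derivative c1 * (G l1 t p - G Z t p) + c2 * (G l2 t p - G Z t p) + c3 * (G l3 t p - G Z t p)) (at t within {0..})"
        unfolding G_def
        by (intro DERIV_add DERIV_cmult DERIV_diff solD[OF l1 p t0] solD[OF l2 p t0] solD[OF l3 p t0] solD[OF ZWh p t0])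
    qed
    show "0 \<le> c" using K20 by (simp add: c_def)
    show "\<forall>p\<in>interior M N. \<forall>t\<in>{0..T}. \<bar>c1 * (G l1 t p - G Z t p) + c2 * (G l2 t p - G Z t p) + c3 * (G l3 t p - G Z t p)
       + Aop h M N Z t (\<lambda>p. c1 * (u l1 t p - u Z t p) + c2 * (u l2 t p - u Z t p) + c3 * (u l3 t p - u Z t p)) p\<bar> \<le> c"
    proof (intro ballI)
      fix p t assume p: "p \<in> interior M N" and t: "t \<in> {0..T}"
      define R where "R lam = Qop h M N lam t (u lam t) p - Q1 lam t p" for lam
      have e: "c1 * (G l1 t p - G Z t p) + c2 * (G l2 t p - G Z t p) + c3 * (G l3 t p - G Z t p)
       + Aop h M N Z t (\<lambda>p. c1 * (u l1 t p - u Z t p) + c2 * (u l2 t p - u Z t p) + c3 * (u l3 t p - u Z t p)) p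
       = - (c1 * Qop h M N l1 t (u l1 t) p + c2 * Qop h M N l2 t (u l2 t) p + c3 * Qop h M N l3 t (u l3 t) p)"
        unfolding Aop_lin3 G_def
        using Aop_split[of h M N l1 t "u l1 t" p] Aop_split[of h M N l2 t "u l2 t" p] Aop_split[of h M N l3 t "u l3 t" p]
        by (simp add: algebra_simps)
      have q0: "c1 * Q1 l1 t p + c2 * Q1 l2 t p + c3 * Q1 l3 t p = 0"
      proof (cases "fst p = 1")
        case True
        have "snd p \<in> {1..N-1}" using p by (auto simp: interior_def)
        then have "c1 * l1 (snd p) t + c2 * l2 (snd p) t + c3 * l3 (snd p) t = 0" using canc t by auto
        then have "(c1 * l1 (snd p) t + c2 * l2 (snd p) t + c3 * l3 (snd p) t) *
            (-2 * ext0 M N (u Z t) (1, snd p) + ext0 M N (u Z t) (2, snd p) / 2) / h\<^sup>2 = 0" by simp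
        moreover have "c1 * (a*K/H) + c2*(b*K/H) + c3*(c*K/H) = (c1*a + c2*b + c3*c)*K/(H::real)" for a b c K H
          by (simp add: distrib_right add_divide_distrib mult.assoc)
        ultimately show ?thesis using True unfolding Q1_def by simp
      next
        case False then show ?thesis by (simp add: Q1_def)
      qed
      have "c1 * Qop h M N l1 t (u l1 t) p + c2 * Qop h M N l2 t (u l2 t) p + c3 * Qop h M N l3 t (u l3 t) p
         = c1 * R l1 + c2 * R l2 + c3 * R l3"
        using q0 unfolding R_def by (simp add: algebra_simps)
      moreover have "\<bar>c1 * R l1\<bar> \<le> \<bar>c1\<bar> * (K2 * (pnorm N l1)\<^sup>2)"
        unfolding abs_mult R_def by (intro mult_left_mono Q_approx[OF l1 p t]) auto
      moreover have "\<bar>c2 * R l2\<bar> \<le> \<bar>c2\<bar> * (K2 * (pnorm N l2)\<^sup>2)"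
        unfolding abs_mult R_def by (intro mult_left_mono Q_approx[OF l2 p t]) auto
      moreover have "\<bar>c3 * R l3\<bar> \<le> \<bar>c3\<bar> * (K2 * (pnorm N l3)\<^sup>2)"
        unfolding abs_mult R_def by (intro mult_left_mono Q_approx[OF l3 p t]) auto
      moreover have "\<bar>c1\<bar> * (K2 * (pnorm N l1)\<^sup>2) + \<bar>c2\<bar> * (K2 * (pnorm N l2)\<^sup>2) + \<bar>c3\<bar> * (K2 * (pnorm N l3)\<^sup>2) = c"
        by (simp add: c_def algebra_simps)
      moreover have "\<bar>A + B + C\<bar> \<le> \<bar>A\<bar> + \<bar>B\<bar> + \<bar>C\<bar>" for A B C :: real by linarith
      ultimately show "\<bar>c1 * (G l1 t p - G Z t p) + c2 * (G l2 t p - G Z t p) + c3 * (G l3 t p - G Z t p)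
       + Aop h M N Z t (\<lambda>p. c1 * (u l1 t p - u Z t p) + c2 * (u l2 t p - u Z t p) + c3 * (u l3 t p - u Z t p)) p\<bar> \<le> c"
        unfolding e abs_minus_cancel by (smt (verit))
    qed
  qed
  then show ?thesis using T by (simp add: c_def)
qed

end

lemma conv_seq:
  fixes X :: "nat \<Rightarrow> real"
  assumes b: "\<forall>n\<ge>nz. \<forall>m\<ge>nz. \<bar>X n - X m\<bar> \<le> A / real n + A / real m" and nz: "nz > 0" and A: "A \<ge> 0"
  shows "convergent X"
proof (rule real_Cauchy_convergent, rule CauchyI)
  fix e :: real assume e: "e > 0"
  define K where "K = max nz (nat \<lceil>2 * A / e\<rceil> + 1)"
  have K0: "real K > 0" using nz by (simp add: K_def)
  have "real K > 2 * A / e" unfolding K_def by linarith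
  then have Ke: "2 * A / real K < e" using K0 e by (simp add: divide_less_eq mult.commute pos_divide_less_eq)
  show "\<exists>M. \<forall>m\<ge>M. \<forall>n\<ge>M. norm (X m - X n) < e"
  proof (intro exI allI impI)
    fix m n assume m: "K \<le> m" and n: "K \<le> n"
    have "A / real m \<le> A / real K" using A m K0 by (intro divide_left_mono) auto
    moreover have "A / real n \<le> A / real K" using A n K0 by (intro divide_left_mono) auto
    moreover have "\<bar>X m - X n\<bar> \<le> A / real m + A / real n" using b m n by (auto simp: K_def)
    ultimately show "norm (X m - X n) < e" using Ke by simp
  qed
qed

context heatsetup begin

definition seqL where "seqL x p n = real n * (u (\<lambda>j t. x j t / real n) T p - u Z T p)"
definition Lop where "Lop x p = lim (seqL x p)"

lemma div_Wh:
  assumes x: "x \<in> pspace N" and n: "real n > 2 * pnorm N x" "n > 0"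
  shows "(\<lambda>j t. x j t / real n) \<in> Wh N" "pnorm N (\<lambda>j t. x j t / real n) \<le> pnorm N x / real n"
proof -
  show "pnorm N (\<lambda>j t. x j t / real n) \<le> pnorm N x / real n" using pnorm_div[OF N x, of "real n"] by simp
  show "(\<lambda>j t. x j t / real n) \<in> Wh N"
    by (rule Wh_div[OF N x]) (use n in \<open>simp add: divide_less_eq\<close>)
qed

lemma sq_bound:
  assumes "0 \<le> d" "d \<le> P / real n" "n > 0"
  shows "real n * d\<^sup>2 \<le> P\<^sup>2 / real n"
proof -
  have "d\<^sup>2 \<le> (P / real n)\<^sup>2" using assms by (intro power_mono) auto
  then have "real n * d\<^sup>2 \<le> real n * (P / real n)\<^sup>2" by (intro mult_left_mono) auto
  also have "\<dots> = P\<^sup>2 / real n" using assms(3) by (simp add: power2_eq_square)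
  finally show ?thesis .
qed

definition thr where "thr x = nat \<lceil>2 * pnorm N x\<rceil> + 1"

lemma thr: "n \<ge> thr x \<Longrightarrow> real n > 2 * pnorm N x \<and> n > 0"
  unfolding thr_def by linarith

lemma seq_diff:
  assumes x: "x \<in> pspace N" and n: "n \<ge> thr x" and m: "m \<ge> thr x" and p: "p \<in> interior M N"
  shows "\<bar>seqL x p n - seqL x p m\<bar> \<le> CE h M N T * K2 * (pnorm N x)\<^sup>2 / real n + CE h M N T * K2 * (pnorm N x)\<^sup>2 / real m"
proof -
  note tn = thr[OF n] and tm = thr[OF m]
  have W1: "(\<lambda>j t. x j t / real n) \<in> Wh N" and d1: "pnorm N (\<lambda>j t. x j t / real n) \<le> pnorm N x / real n"
    using div_Wh[OF x] tn by auto
  have W2: "(\<lambda>j t. x j t / real m) \<in> Wh N" and d2: "pnorm N (\<lambda>j t. x j t / real m) \<le> pnorm N x / real m"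
    using div_Wh[OF x] tm by auto
  have "\<forall>j\<in>{1..N-1}. \<forall>t\<ge>0. real n * (x j t / real n) + (- real m) * (x j t / real m) + 0 * Z j t = 0"
    using tn tm by simp
  from V2[OF W1 W2 ZWh this] p
  have "\<bar>real n * (u (\<lambda>j t. x j t / real n) T p - u Z T p) + - real m * (u (\<lambda>j t. x j t / real m) T p - u Z T p) + 0 * (u Z T p - u Z T p)\<bar>
     \<le> CE h M N T * (K2 * (\<bar>real n\<bar> * (pnorm N (\<lambda>j t. x j t / real n))\<^sup>2 + \<bar>- real m\<bar> * (pnorm N (\<lambda>j t. x j t / real m))\<^sup>2 + \<bar>0\<bar> * (pnorm N Z)\<^sup>2))"
    by blast
  moreover have "real n * (pnorm N (\<lambda>j t. x j t / real n))\<^sup>2 \<le> (pnorm N x)\<^sup>2 / real n"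
    by (rule sq_bound[OF _ d1]) (use pnorm_nonneg[OF N] W1 tn in \<open>auto simp: Wh_def\<close>)
  moreover have "real m * (pnorm N (\<lambda>j t. x j t / real m))\<^sup>2 \<le> (pnorm N x)\<^sup>2 / real m"
    by (rule sq_bound[OF _ d2]) (use pnorm_nonneg[OF N] W2 tm in \<open>auto simp: Wh_def\<close>)
  ultimately have "\<bar>seqL x p n - seqL x p m\<bar> \<le> CE h M N T * (K2 * ((pnorm N x)\<^sup>2 / real n + (pnorm N x)\<^sup>2 / real m))"
  proof -
    assume a1: "\<bar>real n * (u (\<lambda>j t. x j t / real n) T p - u Z T p) + - real m * (u (\<lambda>j t. x j t / real m) T p - u Z T p) + 0 * (u Z T p - u Z T p)\<bar>
     \<le> CE h M N T * (K2 * (\<bar>real n\<bar> * (pnorm N (\<lambda>j t. x j t / real n))\<^sup>2 + \<bar>- real m\<bar> * (pnorm N (\<lambda>j t. x j t / real m))\<^sup>2 + \<bar>0\<bar> * (pnorm N Z)\<^sup>2))"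
     and a2: "real n * (pnorm N (\<lambda>j t. x j t / real n))\<^sup>2 \<le> (pnorm N x)\<^sup>2 / real n"
     and a3: "real m * (pnorm N (\<lambda>j t. x j t / real m))\<^sup>2 \<le> (pnorm N x)\<^sup>2 / real m"
    have "CE h M N T * (K2 * (\<bar>real n\<bar> * (pnorm N (\<lambda>j t. x j t / real n))\<^sup>2 + \<bar>- real m\<bar> * (pnorm N (\<lambda>j t. x j t / real m))\<^sup>2 + \<bar>0\<bar> * (pnorm N Z)\<^sup>2))
       \<le> CE h M N T * (K2 * ((pnorm N x)\<^sup>2 / real n + (pnorm N x)\<^sup>2 / real m))"
      using a2 a3 CE0 K20 by (intro mult_left_mono) auto
    moreover have "real n * (u (\<lambda>j t. x j t / real n) T p - u Z T p) + - real m * (u (\<lambda>j t. x j t / real m) T p - u Z T p) + 0 * (u Z T p - u Z T p)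
       = seqL x p n - seqL x p m" by (simp add: seqL_def)
    ultimately show ?thesis using a1 by linarith
  qed
  then show ?thesis by (simp add: algebra_simps)
qed

lemma seq_conv:
  assumes x: "x \<in> pspace N" and p: "p \<in> interior M N"
  shows "seqL x p \<longlonglongrightarrow> Lop x p"
proof -
  have "convergent (seqL x p)"
    by (rule conv_seq[where nz="thr x" and A="CE h M N T * K2 * (pnorm N x)\<^sup>2"])
       (use seq_diff[OF x _ _ p] CE0 K20 in \<open>auto simp: thr_def\<close>)
  then show ?thesis by (simp add: Lop_def convergent_LIMSEQ_iff)
qed


lemma Lop_bound:
  assumes x: "x \<in> pspace N" and p: "p \<in> interior M N"
  shows "\<bar>Lop x p\<bar> \<le> C1 * pnorm N x"
proof -
  have "(\<lambda>n. \<bar>seqL x p n\<bar>) \<longlonglongrightarrow> \<bar>Lop x p\<bar>" by (intro tendsto_rabs seq_conv[OF x p])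
  moreover have "\<forall>n\<ge>thr x. \<bar>seqL x p n\<bar> \<le> C1 * pnorm N x"
  proof (intro allI impI)
    fix n assume n: "n \<ge> thr x"
    note tn = thr[OF n]
    have W1: "(\<lambda>j t. x j t / real n) \<in> Wh N" and d1: "pnorm N (\<lambda>j t. x j t / real n) \<le> pnorm N x / real n"
      using div_Wh[OF x] tn by auto
    have "\<bar>u (\<lambda>j t. x j t / real n) T p - u Z T p\<bar> \<le> C1 * pnorm N (\<lambda>j t. x j t / real n)"
      using V1[OF W1] p T by auto
    also have "\<dots> \<le> C1 * (pnorm N x / real n)" using d1 C10 by (intro mult_left_mono) auto
    finally have "real n * \<bar>u (\<lambda>j t. x j t / real n) T p - u Z T p\<bar> \<le> real n * (C1 * (pnorm N x / real n))"
      by (intro mult_left_mono) auto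
    also have "\<dots> = C1 * pnorm N x" using tn by simp
    finally show "\<bar>seqL x p n\<bar> \<le> C1 * pnorm N x" by (simp add: seqL_def abs_mult)
  qed
  ultimately show ?thesis by (intro LIMSEQ_le_const2) auto
qed

lemma Lop_lin:
  assumes x: "x \<in> pspace N" and y: "y \<in> pspace N" and p: "p \<in> interior M N"
  shows "Lop (\<lambda>j t. a * x j t + b * y j t) p = a * Lop x p + b * Lop y p"
proof -
  define z where "z = (\<lambda>j t. a * x j t + b * y j t)"
  have z: "z \<in> pspace N" unfolding z_def by (rule pspace_lin[OF x y])
  define B where "B = CE h M N T * K2 * ((pnorm N z)\<^sup>2 + \<bar>a\<bar> * (pnorm N x)\<^sup>2 + \<bar>b\<bar> * (pnorm N y)\<^sup>2)"
  define k where "k = max (thr z) (max (thr x) (thr y))"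
  have lim1: "(\<lambda>n. seqL z p n - (a * seqL x p n + b * seqL y p n)) \<longlonglongrightarrow> Lop z p - (a * Lop x p + b * Lop y p)"
    by (intro tendsto_intros seq_conv z x y p)
  have lim2: "(\<lambda>n. seqL z p n - (a * seqL x p n + b * seqL y p n)) \<longlonglongrightarrow> 0"
  proof (rule Lim_null_comparison[OF _ lim_const_over_n[of B]])
    show "\<forall>\<^sub>F n in sequentially. norm (seqL z p n - (a * seqL x p n + b * seqL y p n)) \<le> B / real n"
    proof (rule eventually_sequentiallyI[of k])
      fix n assume n: "k \<le> n"
      have tz: "real n > 2 * pnorm N z" "n > 0" and tx: "real n > 2 * pnorm N x" and ty: "real n > 2 * pnorm N y"
        using thr[of z n] thr[of x n] thr[of y n] n by (auto simp: k_def)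
      have W1: "(\<lambda>j t. z j t / real n) \<in> Wh N" and d1: "pnorm N (\<lambda>j t. z j t / real n) \<le> pnorm N z / real n"
        using div_Wh[OF z] tz by auto
      have W2: "(\<lambda>j t. x j t / real n) \<in> Wh N" and d2: "pnorm N (\<lambda>j t. x j t / real n) \<le> pnorm N x / real n"
        using div_Wh[OF x] tx tz by auto
      have W3: "(\<lambda>j t. y j t / real n) \<in> Wh N" and d3: "pnorm N (\<lambda>j t. y j t / real n) \<le> pnorm N y / real n"
        using div_Wh[OF y] ty tz by auto
      have "\<forall>j\<in>{1..N-1}. \<forall>t\<ge>0. real n * (z j t / real n) + (- a * real n) * (x j t / real n) + (- b * real n) * (y j t / real n) = 0"
        using tz by (simp add: z_def)
      from V2[OF W1 W2 W3 this] p
      have v: "\<bar>real n * (u (\<lambda>j t. z j t / real n) T p - u Z T p) + (- a * real n) * (u (\<lambda>j t. x j t / real n) T p - u Z T p)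
           + (- b * real n) * (u (\<lambda>j t. y j t / real n) T p - u Z T p)\<bar>
         \<le> CE h M N T * (K2 * (\<bar>real n\<bar> * (pnorm N (\<lambda>j t. z j t / real n))\<^sup>2 + \<bar>- a * real n\<bar> * (pnorm N (\<lambda>j t. x j t / real n))\<^sup>2
             + \<bar>- b * real n\<bar> * (pnorm N (\<lambda>j t. y j t / real n))\<^sup>2))"
        by blast
      have s1: "real n * (pnorm N (\<lambda>j t. z j t / real n))\<^sup>2 \<le> (pnorm N z)\<^sup>2 / real n"
        by (rule sq_bound[OF _ d1]) (use pnorm_nonneg[OF N] W1 tz in \<open>auto simp: Wh_def\<close>)
      have s2: "real n * (pnorm N (\<lambda>j t. x j t / real n))\<^sup>2 \<le> (pnorm N x)\<^sup>2 / real n"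
        by (rule sq_bound[OF _ d2]) (use pnorm_nonneg[OF N] W2 tz in \<open>auto simp: Wh_def\<close>)
      have s3: "real n * (pnorm N (\<lambda>j t. y j t / real n))\<^sup>2 \<le> (pnorm N y)\<^sup>2 / real n"
        by (rule sq_bound[OF _ d3]) (use pnorm_nonneg[OF N] W3 tz in \<open>auto simp: Wh_def\<close>)
      have "\<bar>real n\<bar> * (pnorm N (\<lambda>j t. z j t / real n))\<^sup>2 + \<bar>- a * real n\<bar> * (pnorm N (\<lambda>j t. x j t / real n))\<^sup>2
             + \<bar>- b * real n\<bar> * (pnorm N (\<lambda>j t. y j t / real n))\<^sup>2
         = real n * (pnorm N (\<lambda>j t. z j t / real n))\<^sup>2 + \<bar>a\<bar> * (real n * (pnorm N (\<lambda>j t. x j t / real n))\<^sup>2)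
             + \<bar>b\<bar> * (real n * (pnorm N (\<lambda>j t. y j t / real n))\<^sup>2)"
        by (simp add: abs_mult)
      also have "\<dots> \<le> (pnorm N z)\<^sup>2 / real n + \<bar>a\<bar> * ((pnorm N x)\<^sup>2 / real n) + \<bar>b\<bar> * ((pnorm N y)\<^sup>2 / real n)"
        using s1 s2 s3 by (intro add_mono mult_left_mono) auto
      finally have "CE h M N T * (K2 * (\<bar>real n\<bar> * (pnorm N (\<lambda>j t. z j t / real n))\<^sup>2 + \<bar>- a * real n\<bar> * (pnorm N (\<lambda>j t. x j t / real n))\<^sup>2
             + \<bar>- b * real n\<bar> * (pnorm N (\<lambda>j t. y j t / real n))\<^sup>2))
         \<le> CE h M N T * (K2 * ((pnorm N z)\<^sup>2 / real n + \<bar>a\<bar> * ((pnorm N x)\<^sup>2 / real n) + \<bar>b\<bar> * ((pnorm N y)\<^sup>2 / real n)))"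
        using CE0 K20 by (intro mult_left_mono) auto
      also have "\<dots> = B / real n" by (simp add: B_def algebra_simps add_divide_distrib)
      finally have bnd: "CE h M N T * (K2 * (\<bar>real n\<bar> * (pnorm N (\<lambda>j t. z j t / real n))\<^sup>2 + \<bar>- a * real n\<bar> * (pnorm N (\<lambda>j t. x j t / real n))\<^sup>2
             + \<bar>- b * real n\<bar> * (pnorm N (\<lambda>j t. y j t / real n))\<^sup>2)) \<le> B / real n" .
      have "real n * (u (\<lambda>j t. z j t / real n) T p - u Z T p) + (- a * real n) * (u (\<lambda>j t. x j t / real n) T p - u Z T p)
           + (- b * real n) * (u (\<lambda>j t. y j t / real n) T p - u Z T p) = seqL z p n - (a * seqL x p n + b * seqL y p n)"
        by (simp add: seqL_def algebra_simps)
      then show "norm (seqL z p n - (a * seqL x p n + b * seqL y p n)) \<le> B / real n"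
        using v bnd by simp
    qed
  qed
  have "Lop z p - (a * Lop x p + b * Lop y p) = 0" using LIMSEQ_unique[OF lim1 lim2] .
  then show ?thesis by (simp add: z_def)
qed

lemma Lop_approx:
  assumes lam: "lam \<in> Wh N" and p: "p \<in> interior M N"
  shows "\<bar>u lam T p - u Z T p - Lop lam p\<bar> \<le> 2 * CE h M N T * K2 * (pnorm N lam)\<^sup>2"
proof -
  define d where "d = pnorm N lam"
  have x: "lam \<in> pspace N" using lam by (simp add: Wh_def)
  have d0: "d \<ge> 0" using pnorm_nonneg[OF N x] by (simp add: d_def)
  have dh: "d < 1/2" using lam by (simp add: Wh_def d_def)
  have "(\<lambda>n. \<bar>(u lam T p - u Z T p) - seqL lam p n\<bar>) \<longlonglongrightarrow> \<bar>(u lam T p - u Z T p) - Lop lam p\<bar>"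
    by (intro tendsto_intros seq_conv[OF x p])
  moreover have "\<forall>n\<ge>1. \<bar>(u lam T p - u Z T p) - seqL lam p n\<bar> \<le> 2 * CE h M N T * K2 * d\<^sup>2"
  proof (intro allI impI)
    fix n :: nat assume n: "n \<ge> 1"
    then have n0: "real n \<ge> 1" by simp
    have W2: "(\<lambda>j t. lam j t / real n) \<in> Wh N"
    proof (rule Wh_div[OF N x])
      have "d / real n \<le> d" using d0 n0 by (simp add: divide_le_eq mult_le_cancel_left1)
      moreover have "pnorm N lam / \<bar>real n\<bar> = d / real n" by (simp add: d_def)
      ultimately show "pnorm N lam / \<bar>real n\<bar> < 1 / 2" using dh by linarith
    qed
    have d2: "pnorm N (\<lambda>j t. lam j t / real n) \<le> d / real n" using pnorm_div[OF N x, of "real n"] by (simp add: d_def)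
    have "\<forall>j\<in>{1..N-1}. \<forall>t\<ge>0. 1 * lam j t + (- real n) * (lam j t / real n) + 0 * Z j t = 0"
      using n0 by simp
    from V2[OF lam W2 ZWh this] p
    have v: "\<bar>1 * (u lam T p - u Z T p) + - real n * (u (\<lambda>j t. lam j t / real n) T p - u Z T p) + 0 * (u Z T p - u Z T p)\<bar>
       \<le> CE h M N T * (K2 * (\<bar>1\<bar> * (pnorm N lam)\<^sup>2 + \<bar>- real n\<bar> * (pnorm N (\<lambda>j t. lam j t / real n))\<^sup>2 + \<bar>0\<bar> * (pnorm N Z)\<^sup>2))"
      by blast
    have s: "real n * (pnorm N (\<lambda>j t. lam j t / real n))\<^sup>2 \<le> d\<^sup>2 / real n"
      by (rule sq_bound[OF _ d2]) (use pnorm_nonneg[OF N] W2 n in \<open>auto simp: Wh_def\<close>)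
    also have "\<dots> \<le> d\<^sup>2" using n0 by (simp add: divide_le_eq mult_le_cancel_left1)
    finally have "(pnorm N lam)\<^sup>2 + real n * (pnorm N (\<lambda>j t. lam j t / real n))\<^sup>2 \<le> 2 * d\<^sup>2"
      by (simp add: d_def)
    then have "CE h M N T * (K2 * (\<bar>1\<bar> * (pnorm N lam)\<^sup>2 + \<bar>- real n\<bar> * (pnorm N (\<lambda>j t. lam j t / real n))\<^sup>2 + \<bar>0\<bar> * (pnorm N Z)\<^sup>2))
       \<le> CE h M N T * (K2 * (2 * d\<^sup>2))" using CE0 K20 by (intro mult_left_mono) auto
    moreover have "1 * (u lam T p - u Z T p) + - real n * (u (\<lambda>j t. lam j t / real n) T p - u Z T p) + 0 * (u Z T p - u Z T p)
       = (u lam T p - u Z T p) - seqL lam p n" by (simp add: seqL_def)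
    ultimately show "\<bar>(u lam T p - u Z T p) - seqL lam p n\<bar> \<le> 2 * CE h M N T * K2 * d\<^sup>2"
      using v by (simp add: algebra_simps)
  qed
  ultimately have "\<bar>(u lam T p - u Z T p) - Lop lam p\<bar> \<le> 2 * CE h M N T * K2 * d\<^sup>2"
    by (intro LIMSEQ_le_const2) auto
  then show ?thesis by (simp add: d_def)
qed

lemma main:
  "\<exists>L :: (nat \<Rightarrow> real \<Rightarrow> real) \<Rightarrow> nat \<times> nat \<Rightarrow> real.
           (\<forall>x\<in>pspace N. \<forall>y\<in>pspace N. \<forall>a b. \<forall>p\<in>interior M N.
               L (\<lambda>j t. a * x j t + b * y j t) p = a * L x p + b * L y p)
         \<and> (\<exists>C. \<forall>x\<in>pspace N. \<forall>p\<in>interior M N. \<bar>L x p\<bar> \<le> C * pnorm N x)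
         \<and> (\<forall>\<epsilon>>0. \<exists>\<delta>>0. \<forall>lam\<in>Wh N. pnorm N lam < \<delta> \<longrightarrow>
               (\<forall>p\<in>interior M N.
                  \<bar>u lam T p - u (\<lambda>j t. 0) T p - L lam p\<bar> \<le> \<epsilon> * pnorm N lam))"
proof (intro exI[of _ Lop] conjI)
  show "\<forall>x\<in>pspace N. \<forall>y\<in>pspace N. \<forall>a b. \<forall>p\<in>interior M N.
               Lop (\<lambda>j t. a * x j t + b * y j t) p = a * Lop x p + b * Lop y p"
    using Lop_lin by blast
  show "\<exists>C. \<forall>x\<in>pspace N. \<forall>p\<in>interior M N. \<bar>Lop x p\<bar> \<le> C * pnorm N x"
    using Lop_bound by blast
  show "\<forall>\<epsilon>>0. \<exists>\<delta>>0. \<forall>lam\<in>Wh N. pnorm N lam < \<delta> \<longrightarrow>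
               (\<forall>p\<in>interior M N. \<bar>u lam T p - u (\<lambda>j t. 0) T p - Lop lam p\<bar> \<le> \<epsilon> * pnorm N lam)"
  proof (intro allI impI)
    fix e :: real assume e: "e > 0"
    define A where "A = 2 * CE h M N T * K2"
    have A0: "A \<ge> 0" using CE0 K20 by (simp add: A_def)
    show "\<exists>\<delta>>0. \<forall>lam\<in>Wh N. pnorm N lam < \<delta> \<longrightarrow>
               (\<forall>p\<in>interior M N. \<bar>u lam T p - u (\<lambda>j t. 0) T p - Lop lam p\<bar> \<le> e * pnorm N lam)"
    proof (intro exI[of _ "e / (A + 1)"] conjI ballI impI)
      show "e / (A + 1) > 0" using e A0 by simp
      fix lam p assume lam: "lam \<in> Wh N" and dl: "pnorm N lam < e / (A + 1)" and p: "p \<in> interior M N"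
      define d where "d = pnorm N lam"
      have d0: "d \<ge> 0" using pnorm_nonneg[OF N] lam by (simp add: d_def Wh_def)
      have "A * d \<le> (A + 1) * d" using d0 by (simp add: algebra_simps)
      also have "\<dots> \<le> e" using dl A0 by (simp add: d_def pos_less_divide_eq mult.commute less_imp_le)
      finally have "A * d * d \<le> e * d" using d0 by (intro mult_right_mono) auto
      then have "A * d\<^sup>2 \<le> e * d" by (simp add: power2_eq_square mult.assoc)
      then show "\<bar>u lam T p - u (\<lambda>j t. 0) T p - Lop lam p\<bar> \<le> e * pnorm N lam"
        using Lop_approx[OF lam p] by (simp add: A_def d_def)
    qed
  qed
qed

end
theorem theorem2p14:
  fixes h T :: real and M N :: nat
    and F :: "real \<Rightarrow> nat \<times> nat \<Rightarrow> real" and u0 :: "nat \<times> nat \<Rightarrow> real"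
    and u :: "(nat \<Rightarrow> real \<Rightarrow> real) \<Rightarrow> real \<Rightarrow> nat \<times> nat \<Rightarrow> real"
  assumes "h > 0" and "M \<ge> 2" and "N \<ge> 2" and "T > 0"
    and "\<forall>p\<in>interior M N. continuous_on {0..} (\<lambda>t. F t p)"
    and "\<forall>lam\<in>Wh N. solves h M N F u0 lam (u lam)"
  shows "\<exists>L :: (nat \<Rightarrow> real \<Rightarrow> real) \<Rightarrow> nat \<times> nat \<Rightarrow> real.
           (\<forall>x\<in>pspace N. \<forall>y\<in>pspace N. \<forall>a b. \<forall>p\<in>interior M N.
               L (\<lambda>j t. a * x j t + b * y j t) p = a * L x p + b * L y p)
         \<and> (\<exists>C. \<forall>x\<in>pspace N. \<forall>p\<in>interior M N. \<bar>L x p\<bar> \<le> C * pnorm N x)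
         \<and> (\<forall>\<epsilon>>0. \<exists>\<delta>>0. \<forall>lam\<in>Wh N. pnorm N lam < \<delta> \<longrightarrow>
               (\<forall>p\<in>interior M N.
                  \<bar>u lam T p - u (\<lambda>j t. 0) T p - L lam p\<bar> \<le> \<epsilon> * pnorm N lam))"
proof -
  interpret heatsetup h T M N F u0 u
    by unfold_locales (use assms in auto)
  show ?thesis using main .
qed

end
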